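(* For every ring $R$ and every nonnegative integer $n$, the set $\mathcal{D}^n(R)$ is closed in $R^R$.
   Context: Rings are commutative with unit. A derivation on $R$ is a map $d\colon R\to R$ with $d(x+y)=d(x)+d(y)$ and $d(xy)=d(x)y+d(y)x$. Inductively: $\mathcal{D}^0(R)=\{0\}$; for $n>0$, $D\in\mathcal{D}^n(R)$ if $D$ is additive and $D(xy)-D(x)y-D(y)x=B(x,y)$ for all $x,y\in R$, where $B$ in each variable separately is in $\mathcal{D}^{n-1}(R)$. $R^R$ is the set of all maps $R\to R$ with the product topology, where $R$ has the discrete topology. *)

theory Defs
  imports "HOL-Analysis.Analysis"
begin

definition additive_map :: "('a::comm_ring_1 \<Rightarrow> 'a) \<Rightarrow> bool" where
  "additive_map d \<longleftrightarrow> (\<forall>x y. d (x + y) = d x + d y)"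

fun higher_derivs :: "nat \<Rightarrow> ('a::comm_ring_1 \<Rightarrow> 'a) set" where
  "higher_derivs 0 = {\<lambda>_. 0}"
| "higher_derivs (Suc n) =
     {D. additive_map D \<and>
         (\<forall>x. (\<lambda>y. D (x * y) - D x * y - D y * x) \<in> higher_derivs n) \<and>
         (\<forall>y. (\<lambda>x. D (x * y) - D x * y - D y * x) \<in> higher_derivs n)}"

definition maps_topology :: "('a \<Rightarrow> 'a) topology" where
  "maps_topology = product_topology (\<lambda>_. discrete_topology UNIV) UNIV"

end

theory Submission
  imports Defs
begin

lemma nbhd_open:
  assumes "finite F"
  shows "openin (maps_topology :: ('a \<Rightarrow> 'a) topology) {D'. \<forall>a\<in>F. D' a = D a}"
proof -
  define S where "S = (\<lambda>a. if a \<in> F then {D a} else (UNIV::'a set))"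
  have eq: "{D'. \<forall>a\<in>F. D' a = D a} = PiE UNIV S"
    by (auto simp: S_def PiE_def Pi_def split: if_splits)
  have "{i. S i \<noteq> UNIV} \<subseteq> F" by (auto simp: S_def)
  then have "finite {i \<in> UNIV. S i \<noteq> topspace (discrete_topology UNIV)}"
    using assms by (auto intro: finite_subset)
  then show ?thesis unfolding maps_topology_def eq
    by (subst openin_PiE_gen) auto
qed

lemma topspace_maps: "topspace (maps_topology :: ('a \<Rightarrow> 'a) topology) = UNIV"
  by (simp add: maps_topology_def)

lemma open_fin:
  assumes "finite F" and "\<And>D D'. (\<forall>a\<in>F. D a = D' a) \<Longrightarrow> P D = P D'"
  shows "openin (maps_topology :: ('a \<Rightarrow> 'a) topology) {D. P D}"
proof (subst openin_subopen, intro ballI)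
  fix D assume "D \<in> {D. P D}"
  then have "{D'. \<forall>a\<in>F. D' a = D a} \<subseteq> {D. P D}"
    using assms(2) by (metis (mono_tags, lifting) mem_Collect_eq subsetI)
  then show "\<exists>T. openin maps_topology T \<and> D \<in> T \<and> T \<subseteq> {D. P D}"
    using nbhd_open[OF assms(1), of D] by blast
qed

lemma closed_fin:
  assumes "finite F" and "\<And>D D'. (\<forall>a\<in>F. D a = D' a) \<Longrightarrow> P D = P D'"
  shows "closedin (maps_topology :: ('a \<Rightarrow> 'a) topology) {D. P D}"
proof -
  have "openin (maps_topology :: ('a \<Rightarrow> 'a) topology) {D. \<not> P D}"
    using open_fin[OF assms(1), of "\<lambda>D. \<not> P D"] assms(2) by blast
  then show ?thesis unfolding closedin_def topspace_maps
    by (simp add: Compl_eq_Diff_UNIV[symmetric] Collect_neg_eq)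
qed

lemma cont_fin:
  assumes "\<And>k. \<exists>F. finite F \<and> (\<forall>D D'. (\<forall>a\<in>F. D a = D' a) \<longrightarrow> T D k = T D' k)"
  shows "continuous_map (maps_topology :: ('a \<Rightarrow> 'a) topology) (maps_topology :: ('a \<Rightarrow> 'a) topology) T"
  unfolding maps_topology_def[of] continuous_map_componentwise_UNIV
proof
  fix k
  obtain F where F: "finite F" "\<forall>D D'. (\<forall>a\<in>F. D a = D' a) \<longrightarrow> T D k = T D' k"
    using assms by blast
  show "continuous_map (product_topology (\<lambda>_. discrete_topology UNIV) UNIV) (discrete_topology UNIV) (\<lambda>x. T x k)"
    unfolding continuous_map_def
  proof (intro conjI allI impI)
    fix U :: "'a set"
    have "openin (maps_topology :: ('a \<Rightarrow> 'a) topology) {D. T D k \<in> U}"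
      by (rule open_fin[OF F(1)]) (use F(2) in metis)
    then show "openin (product_topology (\<lambda>_. discrete_topology UNIV) UNIV)
        {x \<in> topspace (product_topology (\<lambda>_. discrete_topology UNIV) UNIV). T x k \<in> U}"
      by (simp add: maps_topology_def)
  qed auto
qed

theorem lemma2p1:
  fixes n :: nat
  shows "closedin (maps_topology :: ('a::comm_ring_1 \<Rightarrow> 'a) topology) (higher_derivs n)"
proof (induction n)
  case 0
  have "higher_derivs 0 = (\<Inter>a. {D::'a\<Rightarrow>'a. D a = 0})" by auto
  moreover have "closedin (maps_topology :: ('a \<Rightarrow> 'a) topology) (\<Inter>a. {D::'a\<Rightarrow>'a. D a = 0})"
  proof -
    have "\<And>a. closedin (maps_topology :: ('a \<Rightarrow> 'a) topology) {D::'a\<Rightarrow>'a. D a = 0}"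
      subgoal for a by (rule closed_fin[of "{a}"]) auto
      done
    then show ?thesis by (intro closedin_Inter) auto
  qed
  ultimately show ?case by simp
next
  case (Suc n)
  define A where "A = (\<Inter>p. {D::'a\<Rightarrow>'a. D (fst p + snd p) = D (fst p) + D (snd p)})"
  define B where "B = (\<Inter>x. {D::'a\<Rightarrow>'a. (\<lambda>y. D (x * y) - D x * y - D y * x) \<in> higher_derivs n})"
  define C where "C = (\<Inter>y. {D::'a\<Rightarrow>'a. (\<lambda>x. D (x * y) - D x * y - D y * x) \<in> higher_derivs n})"
  have eq: "higher_derivs (Suc n) = A \<inter> B \<inter> C"
    by (auto simp: A_def B_def C_def additive_map_def)
  have cA: "closedin (maps_topology :: ('a \<Rightarrow> 'a) topology) A"
  proof -
    have "\<And>p. closedin (maps_topology :: ('a \<Rightarrow> 'a) topology) {D::'a\<Rightarrow>'a. D (fst p + snd p) = D (fst p) + D (snd p)}"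
      subgoal for p by (rule closed_fin[of "{fst p + snd p, fst p, snd p}"]) auto
      done
    then show ?thesis unfolding A_def by (intro closedin_Inter) auto
  qed
  have pre: "closedin (maps_topology :: ('a \<Rightarrow> 'a) topology) {D. T D \<in> higher_derivs n}"
    if "continuous_map maps_topology maps_topology T" for T :: "('a\<Rightarrow>'a) \<Rightarrow> ('a\<Rightarrow>'a)"
    using closedin_continuous_map_preimage[OF that Suc.IH] by (simp add: topspace_maps)
  have cB: "closedin (maps_topology :: ('a \<Rightarrow> 'a) topology) B"
  proof -
    have "closedin (maps_topology :: ('a \<Rightarrow> 'a) topology)
       {D::'a\<Rightarrow>'a. (\<lambda>y. D (x * y) - D x * y - D y * x) \<in> higher_derivs n}" for x
    proof (rule pre, rule cont_fin)
      fix k :: 'a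
      show "\<exists>F. finite F \<and> (\<forall>D D'. (\<forall>a\<in>F. D a = D' a) \<longrightarrow>
        D (x * k) - D x * k - D k * x = D' (x * k) - D' x * k - D' k * x)"
        by (rule exI[of _ "{x*k, x, k}"]) auto
    qed
    then show ?thesis unfolding B_def by (intro closedin_Inter) auto
  qed
  have cC: "closedin (maps_topology :: ('a \<Rightarrow> 'a) topology) C"
  proof -
    have "closedin (maps_topology :: ('a \<Rightarrow> 'a) topology)
       {D::'a\<Rightarrow>'a. (\<lambda>x. D (x * y) - D x * y - D y * x) \<in> higher_derivs n}" for y
    proof (rule pre, rule cont_fin)
      fix k :: 'a
      show "\<exists>F. finite F \<and> (\<forall>D D'. (\<forall>a\<in>F. D a = D' a) \<longrightarrow>
        D (k * y) - D k * y - D y * k = D' (k * y) - D' k * y - D' y * k)"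
        by (rule exI[of _ "{k*y, k, y}"]) auto
    qed
    then show ?thesis unfolding C_def by (intro closedin_Inter) auto
  qed
  show ?case unfolding eq using cA cB cC by (intro closedin_Int)
qed

end
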